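(* For every odd $N\ge3$ we have ${}'\mathcal X^+_{N-2}={}^\sharp\mathcal X^+_{N-2}$.
   Context: For an odd integer $M\ge3$ the following objects are defined (we write $[i,j]=\{h\in\mathbb Z:i\le h\le j\}$, empty if $i>j$). A $2$-element subset $\{i,j\}\subseteq[1,M]$ is written $ij$ when either ($i<j$ and $j-i$ odd) or ($i>j$ and $i-j$ even); each $2$-element subset has exactly one such writing. Let $\mathcal P_M$ be the set of all finite sets $B$ of pairwise disjoint $2$-element subsets of $[1,M]$; for $B\in\mathcal P_M$ let $\mathrm{supp}(B)=\bigcup_{X\in B}X$, $B^0=\{\{i,j\}\in B: i-j\text{ even}\}$, $B^1=\{\{i,j\}\in B: i-j\text{ odd}\}$. A set $X\subseteq[1,M]$ is $0$-covered (resp. $1$-covered) by $B^1$ if there are $a_1b_1,\dots,a_sb_s\in B^1$ ($s\ge0$, so $a_r<b_r$) with $X=[a_1,b_1]\sqcup\dots\sqcup[a_s,b_s]$ (resp. $X=[a_1,b_1]\sqcup\dots\sqcup[a_s,b_s]\sqcup\{u\}$), disjoint unions. Let ${}^*\mathcal P_M$ be the set of $B\in\mathcal P_M$ such that: for every $ij\in B^1$, $[i+1,j-1]$ is $0$-covered by $B^1$; and there is a sequence $(i_1,\dots,i_{2s})$ in $[1,M]$ with $B^0=\{i_{2s}i_1,i_{2s-1}i_2,\dots,i_{s+1}i_s\}$ ($s=|B^0|$; unique) such that, if $s\ge1$, each of $[i_1+1,i_2-1],\dots,[i_{s-1}+1,i_s-1],[i_{s+1}+1,i_{s+2}-1],\dots,[i_{2s-1}+1,i_{2s}-1]$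 is $0$-covered by $B^1$. Let $\mathcal X^+_{M-2}$ be the set of $B\in{}^*\mathcal P_M$ such that $M\notin\mathrm{supp}(B)$ and either $s=0$, or $s$ is odd and either (i) $[1,i_1-1]$ is $1$-covered and $[i_{2s}+1,M-1]$ is $0$-covered by $B^1$, or (ii) $[1,i_1-1]$ is $0$-covered and $[i_{2s}+1,M-1]$ is $1$-covered by $B^1$. For $B\in\mathcal X^+_{M-2}$ with $s\ge1$ there is a unique $u_B$: in case (i), $u_B\in[1,i_1-1]$ with $[1,u_B-1]$, $[u_B+1,i_1-1]$ $0$-covered by $B^1$ ($u_B$ odd); in case (ii), $u_B\in[i_{2s}+1,M-1]$ with $[i_{2s}+1,u_B-1]$, $[u_B+1,M-1]$ $0$-covered by $B^1$ ($u_B$ even). Let ${}'\mathcal X^+_{M-2}$ be the set of $B\in\mathcal X^+_{M-2}$ such that either ($|B^0|=0$ and $M-1\notin\mathrm{supp}(B)$) or ($|B^0|\ge1$ and $u_B$ even). For odd $M\ge5$ and $k\in[1,M-1]$ let $\iota_k:[1,M-2]\to[1,M]$ be $\iota_k(i)=i$ for $i<k$ and $\iota_k(i)=i+2$ for $i\ge k$, and let $I_k:\mathcal P_{M-2}\to\mathcal P_M$ send $B$ to $\{\{\iota_k(a),\iota_k(b)\}:\{a,b\}\in B\}\cup\{\{k,k+1\}\}$. Let ${}'Pr^+_{M-2}\subseteq\mathcal P_M$ consist of $\emptyset$ and of the sets $\{\{M-2,1\},\{M-3,2\},\dots,\{M-\tau,\tau-1\}\}$ for even $\tau\in[2,(M-1)/2]$.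 Define ${}^\sharp\mathcal X^+_{M-2}\subseteq\mathcal P_M$ recursively: ${}^\sharp\mathcal X^+_1=\{\emptyset\}\subseteq\mathcal P_3$; for $M\ge5$, $B\in\mathcal P_M$ lies in ${}^\sharp\mathcal X^+_{M-2}$ iff either $B\in{}'Pr^+_{M-2}$, or $|B^0|>0$ and $B=I_k(B')$ for some $B'\in{}^\sharp\mathcal X^+_{M-4}$ and $k\in[1,M-2]$, or $|B^0|=0$ and $B=I_k(B')$ for some $B'\in{}^\sharp\mathcal X^+_{M-4}$ and $k\in[1,M-3]$. *)

theory Defs
  imports Main
begin

text \<open>Pairs are 2-element subsets of nat; the parameter M is the odd integer M of the paper.
  PM M is the paper's P_M.\<close>

definition PM :: "nat \<Rightarrow> nat set set set" where
  "PM M = {B. finite B \<and> (\<forall>X\<in>B. X \<subseteq> {1..M} \<and> card X = 2)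
              \<and> (\<forall>X\<in>B. \<forall>Y\<in>B. X \<noteq> Y \<longrightarrow> X \<inter> Y = {})}"

definition supp :: "nat set set \<Rightarrow> nat set" where
  "supp B = \<Union>B"

text \<open>For a 2-element set {i,j}, i-j is even iff Max - Min is even.\<close>
definition B0 :: "nat set set \<Rightarrow> nat set set" where
  "B0 B = {X\<in>B. even (Max X - Min X)}"

definition B1 :: "nat set set \<Rightarrow> nat set set" where
  "B1 B = {X\<in>B. odd (Max X - Min X)}"

definition ivl :: "nat set \<Rightarrow> nat set" where
  "ivl P = {Min P..Max P}"

definition cov0 :: "nat set set \<Rightarrow> nat set \<Rightarrow> bool" where
  "cov0 C X \<longleftrightarrow> (\<exists>S\<subseteq>C. (\<forall>P\<in>S. \<forall>Q\<in>S. P \<noteq> Q \<longrightarrow> ivl P \<inter> ivl Q = {})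
                      \<and> X = (\<Union>P\<in>S. ivl P))"

definition cov1 :: "nat set set \<Rightarrow> nat set \<Rightarrow> bool" where
  "cov1 C X \<longleftrightarrow> (\<exists>S\<subseteq>C. \<exists>u. (\<forall>P\<in>S. \<forall>Q\<in>S. P \<noteq> Q \<longrightarrow> ivl P \<inter> ivl Q = {})
                      \<and> u \<notin> (\<Union>P\<in>S. ivl P) \<and> X = insert u (\<Union>P\<in>S. ivl P))"

definition seq_ok :: "nat \<Rightarrow> nat set set \<Rightarrow> nat \<Rightarrow> (nat \<Rightarrow> nat) \<Rightarrow> bool" where
  "seq_ok M B s i \<longleftrightarrow> s = card (B0 B)
     \<and> (\<forall>k\<in>{1..2*s}. i k \<in> {1..M})
     \<and> strict_mono_on {1..2*s} i
     \<and> B0 B = {{i (2*s+1-k), i k} | k. k \<in> {1..s}}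
     \<and> (\<forall>k\<in>{1..<s}. cov0 (B1 B) {i k + 1 .. i (k+1) - 1})
     \<and> (\<forall>k\<in>{s+1..<2*s}. cov0 (B1 B) {i k + 1 .. i (k+1) - 1})"

definition starP :: "nat \<Rightarrow> nat set set set" where
  "starP M = {B \<in> PM M.
     (\<forall>X\<in>B1 B. cov0 (B1 B) {Min X + 1 .. Max X - 1})
     \<and> (\<exists>i. seq_ok M B (card (B0 B)) i)}"

definition Xplus :: "nat \<Rightarrow> nat set set set" where
  "Xplus M = {B \<in> starP M. M \<notin> supp B \<and>
     (card (B0 B) = 0 \<or>
      (odd (card (B0 B)) \<and> (\<exists>i. seq_ok M B (card (B0 B)) i \<and>
         ((cov1 (B1 B) {1 .. i 1 - 1} \<and> cov0 (B1 B) {i (2 * card (B0 B)) + 1 .. M - 1})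
        \<or> (cov0 (B1 B) {1 .. i 1 - 1} \<and> cov1 (B1 B) {i (2 * card (B0 B)) + 1 .. M - 1})))))}"

definition is_uB :: "nat \<Rightarrow> nat set set \<Rightarrow> (nat \<Rightarrow> nat) \<Rightarrow> nat \<Rightarrow> bool" where
  "is_uB M B i u \<longleftrightarrow> (let s = card (B0 B) in
     (cov1 (B1 B) {1 .. i 1 - 1} \<and> cov0 (B1 B) {i (2*s) + 1 .. M - 1}
        \<and> u \<in> {1 .. i 1 - 1} \<and> cov0 (B1 B) {1 .. u - 1} \<and> cov0 (B1 B) {u + 1 .. i 1 - 1})
   \<or> (cov0 (B1 B) {1 .. i 1 - 1} \<and> cov1 (B1 B) {i (2*s) + 1 .. M - 1}
        \<and> u \<in> {i (2*s) + 1 .. M - 1} \<and> cov0 (B1 B) {i (2*s) + 1 .. u - 1}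
        \<and> cov0 (B1 B) {u + 1 .. M - 1}))"

text \<open>Xprime M is the paper's 'X^+_{M-2}.\<close>
definition Xprime :: "nat \<Rightarrow> nat set set set" where
  "Xprime M = {B \<in> Xplus M.
     (card (B0 B) = 0 \<and> M - 1 \<notin> supp B)
   \<or> (card (B0 B) \<ge> 1 \<and> (\<exists>i u. seq_ok M B (card (B0 B)) i \<and> is_uB M B i u \<and> even u))}"

definition iota :: "nat \<Rightarrow> nat \<Rightarrow> nat" where
  "iota k i = (if i < k then i else i + 2)"

definition Ik :: "nat \<Rightarrow> nat set set \<Rightarrow> nat set set" where
  "Ik k B = (\<lambda>X. iota k ` X) ` B \<union> {{k, k+1}}"

definition PrP :: "nat \<Rightarrow> nat set set set" where
  "PrP M = insert {} {{{M - 1 - j, j} | j. j \<in> {1..\<tau>-1}} | \<tau>. even \<tau> \<and> \<tau> \<in> {2..(M-1) div 2}}"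

text \<open>sharpX M is the paper's #X^+_{M-2}; sharpX 3 = {{}}.\<close>
fun sharpX :: "nat \<Rightarrow> nat set set set" where
  "sharpX M = (if M < 5 then {{}} else
     {B \<in> PM M. B \<in> PrP M
        \<or> (card (B0 B) > 0 \<and> (\<exists>k\<in>{1..M-2}. \<exists>B'\<in>sharpX (M-2). B = Ik k B'))
        \<or> (card (B0 B) = 0 \<and> (\<exists>k\<in>{1..M-3}. \<exists>B'\<in>sharpX (M-2). B = Ik k B'))})"

end

theory Submission
  imports Defs
begin

lemma iota_less[simp]: "iota k a < iota k b \<longleftrightarrow> a < b"
  by (auto simp: iota_def)
lemma iota_le[simp]: "iota k a \<le> iota k b \<longleftrightarrow> a \<le> b"
  by (auto simp: iota_def)
lemma iota_eq[simp]: "iota k a = iota k b \<longleftrightarrow> a = b"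
  by (auto simp: iota_def)
lemma iota_ne1[simp]: "iota k a \<noteq> k" by (auto simp: iota_def)
lemma iota_ne2[simp]: "iota k a \<noteq> Suc k" by (auto simp: iota_def)
lemma iota_ne1'[simp]: "k \<noteq> iota k a" by (auto simp: iota_def)
lemma iota_ne2'[simp]: "Suc k \<noteq> iota k a" by (auto simp: iota_def)
lemma iota_0[simp]: "1 \<le> k \<Longrightarrow> iota k 0 = 0" by (auto simp: iota_def)
lemma strict_mono_iota: "strict_mono (iota k)" by (simp add: strict_mono_def)
lemma mono_iota: "mono (iota k)" by (simp add: mono_def)
lemma inj_iota: "inj (iota k)" by (simp add: inj_def)

definition ctr :: "nat \<Rightarrow> nat \<Rightarrow> nat" where
  "ctr k y = (if y < k then y else y - 2)"
lemma iota_ctr: "y \<noteq> k \<Longrightarrow> y \<noteq> Suc k \<Longrightarrow> iota k (ctr k y) = y"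
  by (auto simp: iota_def ctr_def)
lemma ctr_iota[simp]: "ctr k (iota k x) = x"
  by (auto simp: iota_def ctr_def)

lemma iota_lt_k: "iota k x < k \<longleftrightarrow> x < k" by (auto simp: iota_def)
lemma iota_le_Suc_k: "iota k x \<le> Suc k \<longleftrightarrow> x < k" by (auto simp: iota_def)
lemma k_lt_iota: "k < iota k x \<longleftrightarrow> k \<le> x" by (auto simp: iota_def)
lemma k_le_iota: "k \<le> iota k x \<longleftrightarrow> k \<le> x" by (auto simp: iota_def)
lemma Suc_k_lt_iota: "Suc k < iota k x \<longleftrightarrow> k \<le> x" by (auto simp: iota_def)

lemma iota_le_k: "iota k x \<le> k \<longleftrightarrow> x < k" by (auto simp: iota_def)
lemma Suc_k_le_iota: "Suc k \<le> iota k x \<longleftrightarrow> k \<le> x" by (auto simp: iota_def)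

lemma iota_parity: "a \<le> b \<Longrightarrow> even (iota k b - iota k a) \<longleftrightarrow> even (b - a)"
  by (auto simp: iota_def)

lemma Min_img: "finite P \<Longrightarrow> P \<noteq> {} \<Longrightarrow> Min (iota k ` P) = iota k (Min P)"
  by (simp add: mono_Min_commute mono_iota)
lemma Max_img: "finite P \<Longrightarrow> P \<noteq> {} \<Longrightarrow> Max (iota k ` P) = iota k (Max P)"
  by (simp add: mono_Max_commute mono_iota)

lemma ivl_img: "finite P \<Longrightarrow> P \<noteq> {} \<Longrightarrow> ivl (iota k ` P) = {iota k (Min P) .. iota k (Max P)}"
  by (simp add: ivl_def Min_img Max_img)

lemma mem_ivl_img_iota: "finite P \<Longrightarrow> P \<noteq> {} \<Longrightarrow> iota k x \<in> ivl (iota k ` P) \<longleftrightarrow> x \<in> ivl P"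
  by (subst ivl_img) (auto simp: ivl_def)

lemma k_mem_ivl_img: "finite P \<Longrightarrow> P \<noteq> {} \<Longrightarrow> k \<in> ivl (iota k ` P) \<longleftrightarrow> Min P < k \<and> k \<le> Max P"
  by (subst ivl_img) (auto simp: iota_le_k k_le_iota iota_le_Suc_k Suc_k_le_iota simp del: iota_le)
lemma Suc_k_mem_ivl_img: "finite P \<Longrightarrow> P \<noteq> {} \<Longrightarrow> Suc k \<in> ivl (iota k ` P) \<longleftrightarrow> Min P < k \<and> k \<le> Max P"
  by (subst ivl_img) (auto simp: iota_le_k k_le_iota iota_le_Suc_k Suc_k_le_iota simp del: iota_le)

lemma ivl_pair: "ivl {k, Suc k} = {k, Suc k}"
  by (auto simp: ivl_def)

lemma ivl_img_disj:
  assumes "finite P" "P \<noteq> {}" "finite Q" "Q \<noteq> {}" "ivl P \<inter> ivl Q = {}"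
  shows "ivl (iota k ` P) \<inter> ivl (iota k ` Q) = {}"
proof (rule ccontr)
  assume "ivl (iota k ` P) \<inter> ivl (iota k ` Q) \<noteq> {}"
  then obtain y where y: "y \<in> ivl (iota k ` P)" "y \<in> ivl (iota k ` Q)" by blast
  show False
  proof (cases "y = k \<or> y = Suc k")
    case True
    then have "Min P < k \<and> k \<le> Max P" "Min Q < k \<and> k \<le> Max Q"
      using y k_mem_ivl_img[OF assms(1,2)] Suc_k_mem_ivl_img[OF assms(1,2)]
        k_mem_ivl_img[OF assms(3,4)] Suc_k_mem_ivl_img[OF assms(3,4)] by auto
    then have "k \<in> ivl P \<inter> ivl Q" by (auto simp: ivl_def)
    then show False using assms(5) by blast
  next
    case False
    then have "iota k (ctr k y) = y" by (auto intro: iota_ctr)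
    then have "ctr k y \<in> ivl P" "ctr k y \<in> ivl Q"
      using y mem_ivl_img_iota[OF assms(1,2)] mem_ivl_img_iota[OF assms(3,4)] by metis+
    then show False using assms(5) by blast
  qed
qed

lemma mem_Un_if: "Q \<in> A \<union> (if c then {p} else {}) \<Longrightarrow> Q \<notin> A \<Longrightarrow> Q = p \<and> c"
  by (cases c) auto

lemma cov0_ins:
  assumes fin: "\<forall>P\<in>C'. finite P \<and> P \<noteq> {}"
  and C1: "\<And>x. iota k x \<in> Y \<longleftrightarrow> x \<in> X"
  and C2: "k \<in> Y \<longleftrightarrow> Suc k \<in> Y"
  and C3: "0 < k \<Longrightarrow> k - 1 \<in> X \<Longrightarrow> k \<in> X \<Longrightarrow> k \<in> Y"
  and cov: "cov0 C' X"
  shows "cov0 ((\<lambda>P. iota k ` P) ` C' \<union> {{k, Suc k}}) Y"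
proof -
  obtain S where S: "S \<subseteq> C'" and dS: "\<forall>P\<in>S. \<forall>Q\<in>S. P \<noteq> Q \<longrightarrow> ivl P \<inter> ivl Q = {}"
    and XS: "X = (\<Union>P\<in>S. ivl P)"
    using cov unfolding cov0_def by blast
  have finS: "\<And>P. P \<in> S \<Longrightarrow> finite P \<and> P \<noteq> {}" using S fin by blast
  define ex where "ex = (\<exists>P\<in>S. Min P < k \<and> k \<le> Max P)"
  define T where "T = (\<lambda>P. iota k ` P) ` S \<union> (if k \<in> Y \<and> \<not> ex then {{k, Suc k}} else {})"
  have T1: "T \<subseteq> (\<lambda>P. iota k ` P) ` C' \<union> {{k, Suc k}}" unfolding T_def by (rule Un_mono[OF image_mono[OF S]]) simp
  have T2: "\<forall>P\<in>T. \<forall>Q\<in>T. P \<noteq> Q \<longrightarrow> ivl P \<inter> ivl Q = {}"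
  proof (intro ballI impI)
    fix P Q assume P: "P \<in> T" and Q: "Q \<in> T" and PQ: "P \<noteq> Q"
    have img_pair: "ivl (iota k ` P0) \<inter> ivl {k, Suc k} = {}" if "P0 \<in> S" "\<not> ex" for P0
    proof -
      have "\<not> (Min P0 < k \<and> k \<le> Max P0)" using that ex_def by blast
      then show ?thesis using k_mem_ivl_img[of P0 k] Suc_k_mem_ivl_img[of P0 k] finS[OF that(1)]
        by (auto simp: ivl_pair)
    qed
    show "ivl P \<inter> ivl Q = {}"
    proof (cases "P \<in> (\<lambda>P. iota k ` P) ` S")
      case True
      then obtain P0 where P0: "P0 \<in> S" "P = iota k ` P0" by blast
      show ?thesis
      proof (cases "Q \<in> (\<lambda>P. iota k ` P) ` S")
        case True
        then obtain Q0 where Q0: "Q0 \<in> S" "Q = iota k ` Q0" by blast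
        then have "P0 \<noteq> Q0" using P0 PQ by blast
        then have "ivl P0 \<inter> ivl Q0 = {}" using dS P0 Q0 by blast
        moreover have "finite P0" "P0 \<noteq> {}" "finite Q0" "Q0 \<noteq> {}" using finS P0(1) Q0(1) by auto
        ultimately show ?thesis using ivl_img_disj[of P0 Q0 k] P0(2) Q0(2) by simp
      next
        case False
        have "Q \<in> (\<lambda>P. iota k ` P) ` S \<union> (if k \<in> Y \<and> \<not> ex then {{k, Suc k}} else {})" using Q unfolding T_def .
        from mem_Un_if[OF this False] have "Q = {k, Suc k}" "k \<in> Y \<and> \<not> ex" by auto
        then show ?thesis using img_pair P0 by blast
      qed
    next
      case False
      have "P \<in> (\<lambda>P. iota k ` P) ` S \<union> (if k \<in> Y \<and> \<not> ex then {{k, Suc k}} else {})" using P unfolding T_def .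
      from mem_Un_if[OF this False] have Pk: "P = {k, Suc k}" "k \<in> Y \<and> \<not> ex" by auto
      have "Q \<in> (\<lambda>P. iota k ` P) ` S"
      proof (rule ccontr)
        assume nQ: "Q \<notin> (\<lambda>P. iota k ` P) ` S"
        have "Q \<in> (\<lambda>P. iota k ` P) ` S \<union> (if k \<in> Y \<and> \<not> ex then {{k, Suc k}} else {})" using Q unfolding T_def .
        from mem_Un_if[OF this nQ] have "Q = {k, Suc k}" by auto
        then show False using Pk PQ by simp
      qed
      then obtain Q0 where Q0: "Q0 \<in> S" "Q = iota k ` Q0" by blast
      then show ?thesis using img_pair Pk by blast
    qed
  qed
  have T3: "Y = (\<Union>P\<in>T. ivl P)"
  proof (intro equalityI subsetI)
    fix y assume y: "y \<in> Y"
    show "y \<in> (\<Union>P\<in>T. ivl P)"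
    proof (cases "y = k \<or> y = Suc k")
      case True
      then have kY: "k \<in> Y" using y C2 by auto
      show ?thesis
      proof (cases ex)
        case True
        then obtain P0 where P0: "P0 \<in> S" "Min P0 < k \<and> k \<le> Max P0" unfolding ex_def by blast
        have inT: "iota k ` P0 \<in> T" unfolding T_def using P0(1) by blast
        have "y \<in> ivl (iota k ` P0)"
          using \<open>y = k \<or> y = Suc k\<close> k_mem_ivl_img[of P0 k] Suc_k_mem_ivl_img[of P0 k] finS[OF P0(1)] P0(2)
          by auto
        then show ?thesis using inT by blast
      next
        case False
        then have "{k, Suc k} \<in> T" using kY unfolding T_def by simp
        then show ?thesis using \<open>y = k \<or> y = Suc k\<close> ivl_pair by auto
      qed
    next
      case False
      then have yy: "iota k (ctr k y) = y" by (auto intro: iota_ctr)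
      then have "ctr k y \<in> X" using C1 y by metis
      then obtain P0 where "P0 \<in> S" "ctr k y \<in> ivl P0" using XS by blast
      then have "y \<in> ivl (iota k ` P0)" using mem_ivl_img_iota[of P0 k "ctr k y"] finS yy by auto
      then show ?thesis using \<open>P0 \<in> S\<close> unfolding T_def by blast
    qed
  next
    fix y assume "y \<in> (\<Union>P\<in>T. ivl P)"
    then obtain P where P: "P \<in> T" "y \<in> ivl P" by blast
    show "y \<in> Y"
    proof (cases "P \<in> (\<lambda>P. iota k ` P) ` S")
      case True
      then obtain P0 where P0: "P0 \<in> S" "P = iota k ` P0" by blast
      show ?thesis
      proof (cases "y = k \<or> y = Suc k")
        case True
        then have m: "Min P0 < k \<and> k \<le> Max P0"
          using P P0 k_mem_ivl_img[of P0 k] Suc_k_mem_ivl_img[of P0 k] finS by auto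
        then have "k - 1 \<in> ivl P0" "k \<in> ivl P0" by (auto simp: ivl_def)
        then have "k - 1 \<in> X" "k \<in> X" using XS P0 by auto
        then have "k \<in> Y" using C3 m by auto
        then show ?thesis using C2 True by auto
      next
        case False
        then have yy: "iota k (ctr k y) = y" by (auto intro: iota_ctr)
        then have "ctr k y \<in> ivl P0" using P P0 mem_ivl_img_iota[of P0 k "ctr k y"] finS by auto
        then have "ctr k y \<in> X" using XS P0 by auto
        then show ?thesis using C1 yy by metis
      qed
    next
      case False
      have "P \<in> (\<lambda>P. iota k ` P) ` S \<union> (if k \<in> Y \<and> \<not> ex then {{k, Suc k}} else {})" using P(1) unfolding T_def .
      from mem_Un_if[OF this False] have "P = {k, Suc k}" "k \<in> Y" by auto
      then show ?thesis using P C2 ivl_pair by auto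
    qed
  qed
  show ?thesis unfolding cov0_def using T1 T2 T3 by blast
qed

lemma cov0_ctr:
  assumes fin: "\<forall>P\<in>C'. finite P \<and> P \<noteq> {}"
  and C1: "\<And>x. iota k x \<in> Y \<longleftrightarrow> x \<in> X"
  and cov: "cov0 ((\<lambda>P. iota k ` P) ` C' \<union> {{k, Suc k}}) Y"
  shows "cov0 C' X"
proof -
  obtain T where T: "T \<subseteq> (\<lambda>P. iota k ` P) ` C' \<union> {{k, Suc k}}"
    and dT: "\<forall>P\<in>T. \<forall>Q\<in>T. P \<noteq> Q \<longrightarrow> ivl P \<inter> ivl Q = {}"
    and YT: "Y = (\<Union>P\<in>T. ivl P)"
    using cov unfolding cov0_def by blast
  define S where "S = {P \<in> C'. iota k ` P \<in> T}"
  have S1: "S \<subseteq> C'" unfolding S_def by auto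
  have S2: "\<forall>P\<in>S. \<forall>Q\<in>S. P \<noteq> Q \<longrightarrow> ivl P \<inter> ivl Q = {}"
  proof (intro ballI impI)
    fix P Q assume P: "P \<in> S" and Q: "Q \<in> S" and PQ: "P \<noteq> Q"
    then have "iota k ` P \<noteq> iota k ` Q" using inj_iota by (metis inj_image_eq_iff)
    then have d: "ivl (iota k ` P) \<inter> ivl (iota k ` Q) = {}" using dT P Q unfolding S_def by blast
    show "ivl P \<inter> ivl Q = {}"
    proof (rule ccontr)
      assume "ivl P \<inter> ivl Q \<noteq> {}"
      then obtain x where "x \<in> ivl P" "x \<in> ivl Q" by blast
      then have "iota k x \<in> ivl (iota k ` P)" "iota k x \<in> ivl (iota k ` Q)"
        using mem_ivl_img_iota P Q fin S1 by blast+
      then show False using d by blast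
    qed
  qed
  have S3: "X = (\<Union>P\<in>S. ivl P)"
  proof (intro equalityI subsetI)
    fix x assume "x \<in> X"
    then have "iota k x \<in> Y" using C1 by blast
    then obtain P where P: "P \<in> T" "iota k x \<in> ivl P" using YT by blast
    then have "P \<noteq> {k, Suc k}" using ivl_pair by auto
    then obtain P0 where P0: "P0 \<in> C'" "P = iota k ` P0" using T P by blast
    then have "x \<in> ivl P0" using P mem_ivl_img_iota fin by blast
    moreover have "P0 \<in> S" using P0 P unfolding S_def by auto
    ultimately show "x \<in> (\<Union>P\<in>S. ivl P)" by blast
  next
    fix x assume "x \<in> (\<Union>P\<in>S. ivl P)"
    then obtain P0 where P0: "P0 \<in> S" "x \<in> ivl P0" by blast
    then have "iota k x \<in> ivl (iota k ` P0)" using mem_ivl_img_iota fin S1 by blast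
    then have "iota k x \<in> Y" using YT P0 unfolding S_def by blast
    then show "x \<in> X" using C1 by blast
  qed
  show ?thesis unfolding cov0_def using S1 S2 S3 by blast
qed

lemma cov0_edge1:
  assumes fin: "\<forall>P\<in>C'. finite P \<and> P \<noteq> {}"
  and cov: "cov0 ((\<lambda>P. iota k ` P) ` C' \<union> {{k, Suc k}}) Z"
  and "k \<in> Z" "Suc k \<notin> Z"
  shows False
proof -
  obtain T where T: "T \<subseteq> (\<lambda>P. iota k ` P) ` C' \<union> {{k, Suc k}}"
    and YT: "Z = (\<Union>P\<in>T. ivl P)"
    using cov unfolding cov0_def by blast
  obtain P where P: "P \<in> T" "k \<in> ivl P" using YT assms(3) by blast
  have "Suc k \<notin> ivl P" using P YT assms(4) by blast
  then have "P \<noteq> {k, Suc k}" using ivl_pair by auto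
  then obtain P0 where P0: "P0 \<in> C'" "P = iota k ` P0" using T P by blast
  then show False using P \<open>Suc k \<notin> ivl P\<close> k_mem_ivl_img[of P0 k] Suc_k_mem_ivl_img[of P0 k] fin
    by auto
qed

lemma cov0_edge2:
  assumes fin: "\<forall>P\<in>C'. finite P \<and> P \<noteq> {}"
  and cov: "cov0 ((\<lambda>P. iota k ` P) ` C' \<union> {{k, Suc k}}) Z"
  and "Suc k \<in> Z" "k \<notin> Z"
  shows False
proof -
  obtain T where T: "T \<subseteq> (\<lambda>P. iota k ` P) ` C' \<union> {{k, Suc k}}"
    and YT: "Z = (\<Union>P\<in>T. ivl P)"
    using cov unfolding cov0_def by blast
  obtain P where P: "P \<in> T" "Suc k \<in> ivl P" using YT assms(3) by blast
  have "k \<notin> ivl P" using P YT assms(4) by blast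
  then have "P \<noteq> {k, Suc k}" using ivl_pair by auto
  then obtain P0 where P0: "P0 \<in> C'" "P = iota k ` P0" using T P by blast
  then show False using P \<open>k \<notin> ivl P\<close> k_mem_ivl_img[of P0 k] Suc_k_mem_ivl_img[of P0 k] fin
    by auto
qed

lemma cov1_alt: "cov1 C X \<longleftrightarrow> (\<exists>u\<in>X. cov0 C (X - {u}))"
proof
  assume "cov1 C X"
  then obtain S u where S: "S \<subseteq> C" and d: "\<forall>P\<in>S. \<forall>Q\<in>S. P \<noteq> Q \<longrightarrow> ivl P \<inter> ivl Q = {}"
    and u: "u \<notin> (\<Union>P\<in>S. ivl P)" "X = insert u (\<Union>P\<in>S. ivl P)" unfolding cov1_def by (elim exE conjE)
  from u have uX: "u \<in> X" by simp
  from u have Xu: "X - {u} = (\<Union>P\<in>S. ivl P)" by simp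
  have "cov0 C (X - {u})" unfolding cov0_def Xu
    by (rule exI[of _ S], intro conjI S d refl)
  with uX show "\<exists>u\<in>X. cov0 C (X - {u})" by (rule bexI[rotated])
next
  assume "\<exists>u\<in>X. cov0 C (X - {u})"
  then obtain u where uX: "u \<in> X" and c: "cov0 C (X - {u})" by (rule bexE)
  then obtain S where S: "S \<subseteq> C" and d: "\<forall>P\<in>S. \<forall>Q\<in>S. P \<noteq> Q \<longrightarrow> ivl P \<inter> ivl Q = {}"
    and Xu: "X - {u} = (\<Union>P\<in>S. ivl P)" unfolding cov0_def by (elim exE conjE)
  from Xu have u1: "u \<notin> (\<Union>P\<in>S. ivl P)" by blast
  from Xu uX have u2: "X = insert u (\<Union>P\<in>S. ivl P)" by blast
  show "cov1 C X" unfolding cov1_def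
    by (rule exI[of _ S], intro conjI S exI[of _ u] d u1 u2)
qed

lemma cov1_ins:
  assumes fin: "\<forall>P\<in>C'. finite P \<and> P \<noteq> {}"
  and C1: "\<And>x. iota k x \<in> Y \<longleftrightarrow> x \<in> X"
  and C2: "k \<in> Y \<longleftrightarrow> Suc k \<in> Y"
  and C3: "0 < k \<Longrightarrow> k - 1 \<in> X \<Longrightarrow> k \<in> X \<Longrightarrow> k \<in> Y"
  and cov: "cov1 C' X"
  shows "cov1 ((\<lambda>P. iota k ` P) ` C' \<union> {{k, Suc k}}) Y"
proof -
  obtain u where u: "u \<in> X" "cov0 C' (X - {u})" using cov cov1_alt by blast
  have "cov0 ((\<lambda>P. iota k ` P) ` C' \<union> {{k, Suc k}}) (Y - {iota k u})"
    by (rule cov0_ins[OF fin _ _ _ u(2)]) (use C1 C2 C3 in auto)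
  moreover have "iota k u \<in> Y" using C1 u by blast
  ultimately show ?thesis using cov1_alt by blast
qed

lemma cov1_ctr:
  assumes fin: "\<forall>P\<in>C'. finite P \<and> P \<noteq> {}"
  and C1: "\<And>x. iota k x \<in> Y \<longleftrightarrow> x \<in> X"
  and C2: "k \<in> Y \<longleftrightarrow> Suc k \<in> Y"
  and cov: "cov1 ((\<lambda>P. iota k ` P) ` C' \<union> {{k, Suc k}}) Y"
  shows "cov1 C' X"
proof -
  obtain u where u: "u \<in> Y" "cov0 ((\<lambda>P. iota k ` P) ` C' \<union> {{k, Suc k}}) (Y - {u})"
    using cov cov1_alt by blast
  have "u \<noteq> k"
  proof
    assume "u = k"
    then show False using cov0_edge2[OF fin u(2)] u(1) C2 by auto
  qed
  moreover have "u \<noteq> Suc k"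
  proof
    assume "u = Suc k"
    then show False using cov0_edge1[OF fin u(2)] u(1) C2 by auto
  qed
  ultimately have uu: "iota k (ctr k u) = u" by (auto intro: iota_ctr)
  have eq: "iota k x = u \<longleftrightarrow> x = ctr k u" for x using uu iota_eq by metis
  have "cov0 C' (X - {ctr k u})"
    by (rule cov0_ctr[OF fin _ u(2)]) (use C1 eq in blast)
  moreover have "ctr k u \<in> X" using C1 uu u by metis
  ultimately show ?thesis using cov1_alt by blast
qed

lemma ivC1: "iota k x \<in> {iota k p + 1 .. iota k q - 1} \<longleftrightarrow> x \<in> {p+1..q-1}"
  by (auto simp: iota_def)
lemma ivC2: "k \<in> {iota k p + 1 .. iota k q - 1} \<longleftrightarrow> Suc k \<in> {iota k p + 1 .. iota k q - 1}"
  by (auto simp: iota_def)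
lemma ivC3: "0 < k \<Longrightarrow> k - 1 \<in> {p+1..q-1} \<Longrightarrow> k \<in> {p+1..q-1} \<Longrightarrow> k \<in> {iota k p + 1 .. iota k q - 1}"
  by (auto simp: iota_def)

lemma cov0_iff:
  assumes fin: "\<forall>P\<in>C'. finite P \<and> P \<noteq> {}"
  shows "cov0 ((\<lambda>P. iota k ` P) ` C' \<union> {{k, Suc k}}) {iota k p + 1 .. iota k q - 1} \<longleftrightarrow> cov0 C' {p+1..q-1}"
  using cov0_ins[OF fin ivC1 ivC2 ivC3] cov0_ctr[OF fin ivC1] by blast

lemma cov1_iff:
  assumes fin: "\<forall>P\<in>C'. finite P \<and> P \<noteq> {}"
  shows "cov1 ((\<lambda>P. iota k ` P) ` C' \<union> {{k, Suc k}}) {iota k p + 1 .. iota k q - 1} \<longleftrightarrow> cov1 C' {p+1..q-1}"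
  using cov1_ins[OF fin ivC1 ivC2 ivC3] cov1_ctr[OF fin ivC1 ivC2] by blast

lemma PM_elem:
  assumes "B \<in> PM M" "X \<in> B"
  shows "finite X" "X \<noteq> {}" "X \<subseteq> {1..M}" "card X = 2"
proof -
  show c: "card X = 2" using assms unfolding PM_def by auto
  show "X \<subseteq> {1..M}" using assms unfolding PM_def by auto
  show "finite X" using c by (metis card.infinite zero_neq_numeral)
  show "X \<noteq> {}" using c by auto
qed

lemma PM_fin: "B \<in> PM M \<Longrightarrow> \<forall>P\<in>C. P \<in> B \<longrightarrow> finite P \<and> P \<noteq> {}"
  using PM_elem by blast

lemma fin_B1: "B \<in> PM M \<Longrightarrow> \<forall>P\<in>B1 B. finite P \<and> P \<noteq> {}"
  using PM_elem unfolding B1_def by blast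

lemma par_img: "finite X \<Longrightarrow> X \<noteq> {} \<Longrightarrow>
   even (Max (iota k ` X) - Min (iota k ` X)) \<longleftrightarrow> even (Max X - Min X)"
proof -
  assume a: "finite X" "X \<noteq> {}"
  have "Min X \<le> Max X" using Min_le[OF a(1) Max_in[OF a]] .
  then show ?thesis unfolding Max_img[OF a] Min_img[OF a] by (rule iota_parity)
qed

lemma Ik_eq: "Ik k B = (\<lambda>X. iota k ` X) ` B \<union> {{k, Suc k}}"
  by (simp add: Ik_def)

lemma B1_Ik:
  assumes "B \<in> PM M"
  shows "B1 (Ik k B) = (\<lambda>X. iota k ` X) ` B1 B \<union> {{k, Suc k}}"
proof -
  have "odd (Max (iota k ` X) - Min (iota k ` X)) \<longleftrightarrow> odd (Max X - Min X)" if "X \<in> B" for X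
    using par_img PM_elem[OF assms that] by blast
  moreover have "odd (Max {k, Suc k} - Min {k, Suc k})" by simp
  ultimately show ?thesis unfolding B1_def Ik_eq by auto
qed

lemma B0_Ik:
  assumes "B \<in> PM M"
  shows "B0 (Ik k B) = (\<lambda>X. iota k ` X) ` B0 B"
proof -
  have "even (Max (iota k ` X) - Min (iota k ` X)) \<longleftrightarrow> even (Max X - Min X)" if "X \<in> B" for X
    using par_img PM_elem[OF assms that] by blast
  moreover have "\<not> even (Max {k, Suc k} - Min {k, Suc k})" by simp
  ultimately show ?thesis unfolding B0_def Ik_eq by auto
qed

lemma inj_img: "inj_on (\<lambda>X. iota k ` X) A"
  by (rule inj_onI) (simp add: inj_image_eq_iff[OF inj_iota])

lemma card_B0_Ik: "B \<in> PM M \<Longrightarrow> card (B0 (Ik k B)) = card (B0 B)"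
  by (simp add: B0_Ik card_image[OF inj_img])

lemma supp_Ik: "supp (Ik k B) = iota k ` supp B \<union> {k, Suc k}"
  unfolding supp_def Ik_eq by auto

lemma card_img: "finite X \<Longrightarrow> card (iota k ` X) = card X"
  using card_image inj_iota by (metis inj_on_subset subset_UNIV)

lemma Ik_PM:
  assumes "B \<in> PM M" "1 \<le> k" "k \<le> M"
  shows "Ik k B \<in> PM (M + 2)"
proof -
  have fin: "finite B" using assms unfolding PM_def by blast
  have sub: "iota k ` X \<subseteq> {1..M+2}" if "X \<in> B" for X
    using PM_elem(3)[OF assms(1) that] by (auto simp: iota_def)
  have c2: "card (iota k ` X) = 2" if "X \<in> B" for X
    using PM_elem(1,4)[OF assms(1) that] card_img by simp
  have dj: "X \<inter> Y = {}" if "X \<in> B" "Y \<in> B" "X \<noteq> Y" for X Y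
    using assms(1) that unfolding PM_def by blast
  have djI: "iota k ` X \<inter> iota k ` Y = {}" if "X \<in> B" "Y \<in> B" "X \<noteq> Y" for X Y
    using dj[OF that] by auto
  have djp: "iota k ` X \<inter> {k, Suc k} = {}" for X by auto
  show ?thesis unfolding PM_def Ik_eq
  proof (intro CollectI conjI ballI impI)
    show "finite ((\<lambda>X. iota k ` X) ` B \<union> {{k, Suc k}})" using fin by simp
  next
    fix X assume "X \<in> (\<lambda>X. iota k ` X) ` B \<union> {{k, Suc k}}"
    then show "X \<subseteq> {1..M + 2}" "card X = 2" using sub c2 assms(2,3) by auto
  next
    fix X Y assume "X \<in> (\<lambda>X. iota k ` X) ` B \<union> {{k, Suc k}}" "Y \<in> (\<lambda>X. iota k ` X) ` B \<union> {{k, Suc k}}" "X \<noteq> Y"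
    then show "X \<inter> Y = {}" using djI djp by blast
  qed
qed

definition ctrB :: "nat \<Rightarrow> nat set set \<Rightarrow> nat set set" where
  "ctrB k B = (\<lambda>X. ctr k ` X) ` (B - {{k, Suc k}})"

lemma contract1:
  assumes "B \<in> PM M" "{k, Suc k} \<in> B"
  shows "Ik k (ctrB k B) = B"
proof -
  have dj: "X \<inter> Y = {}" if "X \<in> B" "Y \<in> B" "X \<noteq> Y" for X Y
    using assms(1) that unfolding PM_def by blast
  have bk: "iota k ` ctr k ` X = X" if "X \<in> B - {{k, Suc k}}" for X
  proof -
    have "X \<inter> {k, Suc k} = {}" using dj[of X "{k, Suc k}"] that assms(2) by blast
    then have "\<forall>y\<in>X. iota k (ctr k y) = y" using iota_ctr by blast
    then show ?thesis by (simp add: image_image)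
  qed
  have "(\<lambda>X. iota k ` X) ` ctrB k B = (\<lambda>X. iota k ` ctr k ` X) ` (B - {{k, Suc k}})"
    unfolding ctrB_def by (rule image_image)
  also have "\<dots> = (\<lambda>X. X) ` (B - {{k, Suc k}})" by (rule image_cong[OF refl bk])
  finally have "(\<lambda>X. iota k ` X) ` ctrB k B = B - {{k, Suc k}}" by simp
  then show "Ik k (ctrB k B) = B" unfolding Ik_eq using assms(2) by auto
qed

lemma contract2:
  assumes "B \<in> PM M" "{k, Suc k} \<in> B" "Suc k < M"
  shows "ctrB k B \<in> PM (M - 2)"
proof -
  have dj: "X \<inter> Y = {}" if "X \<in> B" "Y \<in> B" "X \<noteq> Y" for X Y
    using assms(1) that unfolding PM_def by blast
  have bk: "iota k ` ctr k ` X = X" if "X \<in> B - {{k, Suc k}}" for X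
  proof -
    have "X \<inter> {k, Suc k} = {}" using dj[of X "{k, Suc k}"] that assms(2) by blast
    then have "\<forall>y\<in>X. iota k (ctr k y) = y" using iota_ctr by blast
    then show ?thesis by (simp add: image_image)
  qed
  have k1: "1 \<le> k" using PM_elem(3)[OF assms(1,2)] by auto
  have fin: "finite B" using assms unfolding PM_def by blast
  have injc: "inj_on (ctr k) X" if "X \<in> B - {{k, Suc k}}" for X
  proof (rule inj_on_inverseI[where g = "iota k"])
    fix x assume "x \<in> X"
    moreover have "X \<inter> {k, Suc k} = {}" using dj[of X "{k, Suc k}"] that assms(2) by blast
    ultimately show "iota k (ctr k x) = x" using iota_ctr by blast
  qed
  show "ctrB k B \<in> PM (M - 2)" unfolding PM_def
  proof (intro CollectI conjI ballI impI)
    show "finite (ctrB k B)" unfolding ctrB_def using fin by simp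
  next
    fix X' assume "X' \<in> ctrB k B"
    then obtain X where X: "X \<in> B - {{k, Suc k}}" "X' = ctr k ` X" unfolding ctrB_def by blast
    have dk: "X \<inter> {k, Suc k} = {}" using dj[of X "{k, Suc k}"] X assms(2) by blast
    show "X' \<subseteq> {1..M - 2}"
    proof
      fix x assume "x \<in> X'"
      then obtain y where y: "y \<in> X" "x = ctr k y" using X by blast
      have "y \<in> {1..M}" using PM_elem(3)[OF assms(1)] X y by blast
      moreover have "y \<noteq> k" "y \<noteq> Suc k" using dk y by auto
      ultimately show "x \<in> {1..M - 2}" using y assms(3) k1 by (auto simp: ctr_def)
    qed
    show "card X' = 2" using X card_image[OF injc[OF X(1)]] PM_elem(4)[OF assms(1)] by auto
  next
    fix X' Y' assume "X' \<in> ctrB k B" "Y' \<in> ctrB k B" "X' \<noteq> Y'"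
    then obtain X Y where X: "X \<in> B - {{k, Suc k}}" "X' = ctr k ` X"
      and Y: "Y \<in> B - {{k, Suc k}}" "Y' = ctr k ` Y" unfolding ctrB_def by blast
    have "X \<noteq> Y"
    proof
      assume "X = Y"
      then have "X' = Y'" using X(2) Y(2) by simp
      then show False using \<open>X' \<noteq> Y'\<close> by simp
    qed
    then have "X \<inter> Y = {}" using dj X Y by blast
    then have "iota k ` X' \<inter> iota k ` Y' = {}" using bk X Y by simp
    then show "X' \<inter> Y' = {}" by blast
  qed
qed

lemma cov0_empty: "cov0 C {}"
  unfolding cov0_def by (rule exI[of _ "{}"]) simp

lemma cov0G:
  assumes "B' \<in> PM M'"
  shows "cov0 (B1 (Ik k B')) {iota k a + 1 .. iota k b - 1} \<longleftrightarrow> cov0 (B1 B') {a+1..b-1}"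
  unfolding B1_Ik[OF assms] by (rule cov0_iff[OF fin_B1[OF assms]])

lemma cov1G:
  assumes "B' \<in> PM M'"
  shows "cov1 (B1 (Ik k B')) {iota k a + 1 .. iota k b - 1} \<longleftrightarrow> cov1 (B1 B') {a+1..b-1}"
  unfolding B1_Ik[OF assms] by (rule cov1_iff[OF fin_B1[OF assms]])

lemma cov0L:
  assumes "B' \<in> PM M'" "1 \<le> k"
  shows "cov0 (B1 (Ik k B')) {1 .. iota k a - 1} \<longleftrightarrow> cov0 (B1 B') {1..a-1}"
  using cov0G[OF assms(1), of k 0 a] assms(2) by simp

lemma cov1L:
  assumes "B' \<in> PM M'" "1 \<le> k"
  shows "cov1 (B1 (Ik k B')) {1 .. iota k a - 1} \<longleftrightarrow> cov1 (B1 B') {1..a-1}"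
  using cov1G[OF assms(1), of k 0 a] assms(2) by simp

lemma iota_top: "k \<le> M' \<Longrightarrow> iota k M' = M' + 2"
  by (simp add: iota_def)

lemma cov0R:
  assumes "B' \<in> PM M'" "k \<le> M'" "M = M' + 2"
  shows "cov0 (B1 (Ik k B')) {iota k b + 1 .. M - 1} \<longleftrightarrow> cov0 (B1 B') {b+1..M'-1}"
  using cov0G[OF assms(1), of k b M'] assms(2,3) iota_top by simp

lemma cov1R:
  assumes "B' \<in> PM M'" "k \<le> M'" "M = M' + 2"
  shows "cov1 (B1 (Ik k B')) {iota k b + 1 .. M - 1} \<longleftrightarrow> cov1 (B1 B') {b+1..M'-1}"
  using cov1G[OF assms(1), of k b M'] assms(2,3) iota_top by simp

lemma memL: "1 \<le> k \<Longrightarrow> iota k u \<in> {1 .. iota k a - 1} \<longleftrightarrow> u \<in> {1..a-1}"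
  by (auto simp: iota_def)
lemma memR: "k \<le> M' \<Longrightarrow> M = M' + 2 \<Longrightarrow> iota k u \<in> {iota k b + 1 .. M - 1} \<longleftrightarrow> u \<in> {b+1..M'-1}"
  by (auto simp: iota_def)

lemma int_iff:
  assumes "B' \<in> PM M'"
  shows "(\<forall>X\<in>B1 (Ik k B'). cov0 (B1 (Ik k B')) {Min X + 1 .. Max X - 1})
     \<longleftrightarrow> (\<forall>X\<in>B1 B'. cov0 (B1 B') {Min X + 1 .. Max X - 1})"
proof -
  have fin: "\<forall>P\<in>B1 B'. finite P \<and> P \<noteq> {}" by (rule fin_B1[OF assms])
  have e: "\<And>X. X \<in> B1 B' \<Longrightarrow> cov0 (B1 (Ik k B')) {Min (iota k ` X) + 1 .. Max (iota k ` X) - 1}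
      \<longleftrightarrow> cov0 (B1 B') {Min X + 1 .. Max X - 1}"
  proof -
    fix X assume X: "X \<in> B1 B'"
    have fx: "finite X" "X \<noteq> {}" using fin X by auto
    show "?thesis X" unfolding Min_img[OF fx] Max_img[OF fx]
      by (rule cov0G[OF assms])
  qed
  have p: "cov0 (B1 (Ik k B')) {Min {k, Suc k} + 1 .. Max {k, Suc k} - 1}"
    using cov0_empty by simp
  show ?thesis
  proof
    assume a: "\<forall>X\<in>B1 (Ik k B'). cov0 (B1 (Ik k B')) {Min X + 1 .. Max X - 1}"
    show "\<forall>X\<in>B1 B'. cov0 (B1 B') {Min X + 1 .. Max X - 1}"
    proof
      fix X assume X: "X \<in> B1 B'"
      then have "iota k ` X \<in> B1 (Ik k B')" unfolding B1_Ik[OF assms] by blast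
      then show "cov0 (B1 B') {Min X + 1 .. Max X - 1}" using a e[OF X] by blast
    qed
  next
    assume a: "\<forall>X\<in>B1 B'. cov0 (B1 B') {Min X + 1 .. Max X - 1}"
    show "\<forall>X\<in>B1 (Ik k B'). cov0 (B1 (Ik k B')) {Min X + 1 .. Max X - 1}"
    proof
      fix Y assume "Y \<in> B1 (Ik k B')"
      then have "Y = {k, Suc k} \<or> (\<exists>X\<in>B1 B'. Y = iota k ` X)" unfolding B1_Ik[OF assms] by blast
      then show "cov0 (B1 (Ik k B')) {Min Y + 1 .. Max Y - 1}"
      proof
        assume "Y = {k, Suc k}" then show ?thesis using p by simp
      next
        assume "\<exists>X\<in>B1 B'. Y = iota k ` X"
        then obtain X where X: "X \<in> B1 B'" "Y = iota k ` X" by blast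
        then show ?thesis using a e[OF X(1)] by simp
      qed
    qed
  qed
qed

lemma img_pairs: "(\<lambda>X. f ` X) ` {{a j, b j} | j. j \<in> A} = {{f (a j), f (b j)} | j. j \<in> A}"
proof (rule set_eqI, rule iffI)
  fix Y assume "Y \<in> (\<lambda>X. f ` X) ` {{a j, b j} | j. j \<in> A}"
  then obtain j where "j \<in> A" "Y = f ` {a j, b j}" by blast
  then show "Y \<in> {{f (a j), f (b j)} | j. j \<in> A}" by auto
next
  fix Y assume "Y \<in> {{f (a j), f (b j)} | j. j \<in> A}"
  then obtain j where j: "j \<in> A" "Y = {f (a j), f (b j)}" by blast
  then have "Y = f ` {a j, b j}" by simp
  moreover have "{a j, b j} \<in> {{a j, b j} | j. j \<in> A}" using j by blast
  ultimately show "Y \<in> (\<lambda>X. f ` X) ` {{a j, b j} | j. j \<in> A}" by (rule image_eqI)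
qed

lemma seq_ins:
  assumes B': "B' \<in> PM M'" and sq: "seq_ok M' B' s i'" and M: "M = M' + 2"
  shows "seq_ok M (Ik k B') s (\<lambda>j. iota k (i' j))"
proof -
  from sq have s: "s = card (B0 B')"
    and r: "\<forall>j\<in>{1..2*s}. i' j \<in> {1..M'}"
    and m: "strict_mono_on {1..2*s} i'"
    and b0: "B0 B' = {{i' (2*s+1-j), i' j} | j. j \<in> {1..s}}"
    and g1: "\<forall>j\<in>{1..<s}. cov0 (B1 B') {i' j + 1 .. i' (j+1) - 1}"
    and g2: "\<forall>j\<in>{s+1..<2*s}. cov0 (B1 B') {i' j + 1 .. i' (j+1) - 1}"
    unfolding seq_ok_def by blast+
  show ?thesis unfolding seq_ok_def
  proof (intro conjI)
    show "s = card (B0 (Ik k B'))" using s card_B0_Ik[OF B'] by simp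
    show "\<forall>j\<in>{1..2*s}. iota k (i' j) \<in> {1..M}" using r M by (auto simp: iota_def)
    show "strict_mono_on {1..2*s} (\<lambda>j. iota k (i' j))"
      using m by (intro strict_mono_onI) (simp add: strict_mono_onD)
    show "B0 (Ik k B') = {{iota k (i' (2*s+1-j)), iota k (i' j)} | j. j \<in> {1..s}}"
      unfolding B0_Ik[OF B'] b0 by (rule img_pairs)
    show "\<forall>j\<in>{1..<s}. cov0 (B1 (Ik k B')) {iota k (i' j) + 1 .. iota k (i' (j+1)) - 1}"
      using g1 cov0G[OF B'] by blast
    show "\<forall>j\<in>{s+1..<2*s}. cov0 (B1 (Ik k B')) {iota k (i' j) + 1 .. iota k (i' (j+1)) - 1}"
      using g2 cov0G[OF B'] by blast
  qed
qed

lemma seq_ctr: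
  assumes B': "B' \<in> PM M'" and sq: "seq_ok M (Ik k B') s i"
  shows "seq_ok M' B' s (\<lambda>j. ctr k (i j))" "\<forall>j\<in>{1..2*s}. iota k (ctr k (i j)) = i j"
proof -
  from sq have s: "s = card (B0 (Ik k B'))"
    and m: "strict_mono_on {1..2*s} i"
    and b0: "B0 (Ik k B') = {{i (2*s+1-j), i j} | j. j \<in> {1..s}}"
    and g1: "\<forall>j\<in>{1..<s}. cov0 (B1 (Ik k B')) {i j + 1 .. i (j+1) - 1}"
    and g2: "\<forall>j\<in>{s+1..<2*s}. cov0 (B1 (Ik k B')) {i j + 1 .. i (j+1) - 1}"
    unfolding seq_ok_def by blast+
  have inB0: "\<exists>P\<in>B0 (Ik k B'). i j \<in> P" if j: "j \<in> {1..2*s}" for j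
  proof (cases "j \<le> s")
    case True
    then have "{i (2*s+1-j), i j} \<in> B0 (Ik k B')" unfolding b0 using j by auto
    then show ?thesis by blast
  next
    case False
    define j' where "j' = 2*s+1-j"
    have j': "j' \<in> {1..s}" "2*s+1-j' = j" using j False unfolding j'_def by auto
    then have "{i (2*s+1-j'), i j'} \<in> B0 (Ik k B')" unfolding b0 by blast
    then show ?thesis using j' by auto
  qed
  have pre: "\<exists>x. i j = iota k x \<and> x \<in> {1..M'}" if j: "j \<in> {1..2*s}" for j
  proof -
    obtain P where P: "P \<in> B0 (Ik k B')" "i j \<in> P" using inB0[OF j] by blast
    then obtain P' where P': "P' \<in> B0 B'" "P = iota k ` P'" unfolding B0_Ik[OF B'] by blast
    then obtain x where x: "x \<in> P'" "i j = iota k x" using P by blast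
    have "P' \<in> B'" using P' unfolding B0_def by blast
    then have "x \<in> {1..M'}" using PM_elem(3)[OF B'] x by blast
    then show ?thesis using x by blast
  qed
  show bk: "\<forall>j\<in>{1..2*s}. iota k (ctr k (i j)) = i j"
    using pre by fastforce
  have rng: "\<forall>j\<in>{1..2*s}. ctr k (i j) \<in> {1..M'}"
    using pre by fastforce
  show "seq_ok M' B' s (\<lambda>j. ctr k (i j))" unfolding seq_ok_def
  proof (intro conjI)
    show "s = card (B0 B')" using s card_B0_Ik[OF B'] by simp
    show "\<forall>j\<in>{1..2*s}. ctr k (i j) \<in> {1..M'}" by (rule rng)
    show "strict_mono_on {1..2*s} (\<lambda>j. ctr k (i j))"
    proof (rule strict_mono_onI)
      fix a b assume ab: "a \<in> {1..2*s}" "b \<in> {1..2*s}" "a < b"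
      then have "i a < i b" using m by (simp add: strict_mono_onD)
      then have "iota k (ctr k (i a)) < iota k (ctr k (i b))" using bk ab by simp
      then show "ctr k (i a) < ctr k (i b)" by simp
    qed
    have "(\<lambda>X. iota k ` X) ` B0 B' = {{i (2*s+1-j), i j} | j. j \<in> {1..s}}"
      using B0_Ik[OF B'] b0 by simp
    also have "\<dots> = {{iota k (ctr k (i (2*s+1-j))), iota k (ctr k (i j))} | j. j \<in> {1..s}}"
    proof -
      have "i (2*s+1-j) = iota k (ctr k (i (2*s+1-j))) \<and> i j = iota k (ctr k (i j))" if j: "j \<in> {1..s}" for j
      proof -
        have "2*s+1-j \<in> {1..2*s}" "j \<in> {1..2*s}" using j by auto
        then show ?thesis using bk by metis
      qed
      then show ?thesis by (metis (no_types, lifting))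
    qed
    also have "\<dots> = (\<lambda>X. iota k ` X) ` {{ctr k (i (2*s+1-j)), ctr k (i j)} | j. j \<in> {1..s}}"
      by (rule img_pairs[symmetric])
    finally show "B0 B' = {{ctr k (i (2*s+1-j)), ctr k (i j)} | j. j \<in> {1..s}}"
      using inj_img[of k UNIV] by (simp add: inj_image_eq_iff)
    show "\<forall>j\<in>{1..<s}. cov0 (B1 B') {ctr k (i j) + 1 .. ctr k (i (j+1)) - 1}"
    proof
      fix j assume j: "j \<in> {1..<s}"
      then have "iota k (ctr k (i j)) = i j" "iota k (ctr k (i (j+1))) = i (j+1)" using bk by auto
      then show "cov0 (B1 B') {ctr k (i j) + 1 .. ctr k (i (j+1)) - 1}"
        using g1 j cov0G[OF B', of k "ctr k (i j)" "ctr k (i (j+1))"] by simp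
    qed
    show "\<forall>j\<in>{s+1..<2*s}. cov0 (B1 B') {ctr k (i j) + 1 .. ctr k (i (j+1)) - 1}"
    proof
      fix j assume j: "j \<in> {s+1..<2*s}"
      then have "iota k (ctr k (i j)) = i j" "iota k (ctr k (i (j+1))) = i (j+1)" using bk by auto
      then show "cov0 (B1 B') {ctr k (i j) + 1 .. ctr k (i (j+1)) - 1}"
        using g2 j cov0G[OF B', of k "ctr k (i j)" "ctr k (i (j+1))"] by simp
    qed
  qed
qed

definition condX :: "nat \<Rightarrow> nat set set \<Rightarrow> nat \<Rightarrow> (nat \<Rightarrow> nat) \<Rightarrow> bool" where
  "condX M B s i \<longleftrightarrow> (cov1 (B1 B) {1 .. i 1 - 1} \<and> cov0 (B1 B) {i (2 * s) + 1 .. M - 1})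
        \<or> (cov0 (B1 B) {1 .. i 1 - 1} \<and> cov1 (B1 B) {i (2 * s) + 1 .. M - 1})"

definition intc :: "nat set set \<Rightarrow> bool" where
  "intc B \<longleftrightarrow> (\<forall>X\<in>B1 B. cov0 (B1 B) {Min X + 1 .. Max X - 1})"

lemma Xprime_iff: "B \<in> Xprime M \<longleftrightarrow>
   B \<in> PM M \<and> intc B \<and> (\<exists>i. seq_ok M B (card (B0 B)) i) \<and> M \<notin> supp B \<and>
   (card (B0 B) = 0 \<or> (odd (card (B0 B)) \<and> (\<exists>i. seq_ok M B (card (B0 B)) i \<and> condX M B (card (B0 B)) i))) \<and>
   ((card (B0 B) = 0 \<and> M - 1 \<notin> supp B) \<or>
    (card (B0 B) \<ge> 1 \<and> (\<exists>i u. seq_ok M B (card (B0 B)) i \<and> is_uB M B i u \<and> even u)))"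
  unfolding Xprime_def Xplus_def starP_def condX_def intc_def mem_Collect_eq by (simp only: conj_assoc)

lemma cond_iff:
  assumes B': "B' \<in> PM M'" and M: "M = M' + 2" and k: "1 \<le> k" "k \<le> M'"
    and i1: "i 1 = iota k (i' 1)" and i2: "i (2 * s) = iota k (i' (2 * s))"
  shows "condX M (Ik k B') s i \<longleftrightarrow> condX M' B' s i'"
  unfolding condX_def i1 i2 cov0L[OF B' k(1)] cov1L[OF B' k(1)] cov0R[OF B' k(2) M] cov1R[OF B' k(2) M]
  by (rule refl)

lemma uB_iff:
  assumes B': "B' \<in> PM M'" and M: "M = M' + 2" and k: "1 \<le> k" "k \<le> M'"
    and i1: "i 1 = iota k (i' 1)" and i2: "i (2 * card (B0 B')) = iota k (i' (2 * card (B0 B')))"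
  shows "is_uB M (Ik k B') i (iota k u) \<longleftrightarrow> is_uB M' B' i' u"
  unfolding is_uB_def Let_def card_B0_Ik[OF B'] i1 i2 cov0L[OF B' k(1)] cov1L[OF B' k(1)]
    cov0R[OF B' k(2) M] cov1R[OF B' k(2) M] cov0G[OF B'] memL[OF k(1)] memR[OF k(2) M]
  by (rule refl)

lemma uB_not_k:
  assumes B': "B' \<in> PM M'" and M: "M = M' + 2" and k: "1 \<le> k" "k \<le> M'"
    and i1: "i 1 = iota k a" and i2: "i (2 * card (B0 B')) = iota k b"
    and u: "is_uB M (Ik k B') i u"
  shows "u \<noteq> k \<and> u \<noteq> Suc k"
proof -
  have fin: "\<forall>P\<in>B1 B'. finite P \<and> P \<noteq> {}" by (rule fin_B1[OF B'])
  let ?C = "(\<lambda>P. iota k ` P) ` B1 B' \<union> {{k, Suc k}}"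
  have C: "B1 (Ik k B') = ?C" by (rule B1_Ik[OF B'])
  from u have "(u \<in> {1 .. i 1 - 1} \<and> cov0 ?C {1 .. u - 1} \<and> cov0 ?C {u + 1 .. i 1 - 1})
     \<or> (u \<in> {i (2 * card (B0 B')) + 1 .. M - 1} \<and> cov0 ?C {i (2 * card (B0 B')) + 1 .. u - 1}
        \<and> cov0 ?C {u + 1 .. M - 1})"
    unfolding is_uB_def Let_def card_B0_Ik[OF B'] C by blast
  then show ?thesis
  proof
    assume h: "u \<in> {1 .. i 1 - 1} \<and> cov0 ?C {1 .. u - 1} \<and> cov0 ?C {u + 1 .. i 1 - 1}"
    have "u \<noteq> k"
    proof
      assume uk: "u = k"
      have "Suc k \<in> {u + 1 .. i 1 - 1}" "k \<notin> {u + 1 .. i 1 - 1}"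
        using h uk i1 by (auto simp: iota_def split: if_splits)
      then show False using cov0_edge2[OF fin] h by blast
    qed
    moreover have "u \<noteq> Suc k"
    proof
      assume uk: "u = Suc k"
      have "k \<in> {1 .. u - 1}" "Suc k \<notin> {1 .. u - 1}" using uk k by auto
      then show False using cov0_edge1[OF fin] h by blast
    qed
    ultimately show ?thesis by blast
  next
    assume h: "u \<in> {i (2 * card (B0 B')) + 1 .. M - 1} \<and> cov0 ?C {i (2 * card (B0 B')) + 1 .. u - 1}
        \<and> cov0 ?C {u + 1 .. M - 1}"
    have "u \<noteq> k"
    proof
      assume uk: "u = k"
      have "Suc k \<in> {u + 1 .. M - 1}" "k \<notin> {u + 1 .. M - 1}"
        using uk k M by auto
      then show False using cov0_edge2[OF fin] h by blast
    qed
    moreover have "u \<noteq> Suc k"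
    proof
      assume uk: "u = Suc k"
      have "k \<in> {i (2 * card (B0 B')) + 1 .. u - 1}" "Suc k \<notin> {i (2 * card (B0 B')) + 1 .. u - 1}"
        using h uk i2 by (auto simp: iota_def split: if_splits)
      then show False using cov0_edge1[OF fin] h by blast
    qed
    ultimately show ?thesis by blast
  qed
qed

lemma suppM:
  assumes "k \<le> M'" "M = M' + 2"
  shows "M \<notin> supp (Ik k B') \<longleftrightarrow> M' \<notin> supp B'"
proof -
  have "M = iota k M'" using assms iota_top by simp
  moreover have "M \<noteq> k" "M \<noteq> Suc k" using assms by auto
  ultimately show ?thesis unfolding supp_Ik by (auto simp del: iota_eq simp add: inj_image_mem_iff[OF inj_iota])
qed

lemma suppM1:
  assumes "1 \<le> k" "k \<le> M'" "M = M' + 2"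
  shows "M - 1 \<notin> supp (Ik k B') \<longleftrightarrow> (M' - 1 \<notin> supp B' \<and> k < M')"
proof (cases "k = M'")
  case True
  then have "M - 1 \<in> supp (Ik k B')" unfolding supp_Ik using assms by auto
  then show ?thesis using True by simp
next
  case False
  then have "M - 1 = iota k (M' - 1)" using assms by (auto simp: iota_def)
  moreover have "M - 1 \<noteq> k" "M - 1 \<noteq> Suc k" using assms False by auto
  ultimately show ?thesis unfolding supp_Ik using False assms
    by (auto simp del: iota_eq simp add: inj_image_mem_iff[OF inj_iota])
qed

lemma even_iota: "even (iota k u) \<longleftrightarrow> even u" by (simp add: iota_def)

lemma key_ins:
  assumes X': "B' \<in> Xprime M'" and M: "M = M' + 2" and k: "1 \<le> k" "k \<le> M'"
    and k0: "card (B0 B') = 0 \<Longrightarrow> k < M'"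
  shows "Ik k B' \<in> Xprime M"
proof -
  note H = X'[unfolded Xprime_iff]
  have B': "B' \<in> PM M'" using H by blast
  define s where "s = card (B0 B')"
  have cs: "card (B0 (Ik k B')) = s" unfolding s_def by (rule card_B0_Ik[OF B'])
  have PMk: "Ik k B' \<in> PM M" using Ik_PM[OF B' k] M by simp
  have intk: "intc (Ik k B')" using H int_iff[OF B'] unfolding intc_def by blast
  from H obtain i' where i': "seq_ok M' B' s i'" unfolding s_def by blast
  have seqk: "\<exists>i. seq_ok M (Ik k B') (card (B0 (Ik k B'))) i"
    using seq_ins[OF B' i' M] unfolding cs by blast
  have Mk: "M \<notin> supp (Ik k B')" using H suppM[OF k(2) M] by blast
  have P5: "card (B0 (Ik k B')) = 0 \<or> (odd (card (B0 (Ik k B'))) \<and> (\<exists>i. seq_ok M (Ik k B') (card (B0 (Ik k B'))) i \<and> condX M (Ik k B') (card (B0 (Ik k B'))) i))"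
  proof -
    from H have "s = 0 \<or> (odd s \<and> (\<exists>i. seq_ok M' B' s i \<and> condX M' B' s i))" unfolding s_def by blast
    then show ?thesis
    proof
      assume "s = 0" then show ?thesis using cs by simp
    next
      assume "odd s \<and> (\<exists>i. seq_ok M' B' s i \<and> condX M' B' s i)"
      then obtain j where o: "odd s" and j: "seq_ok M' B' s j" "condX M' B' s j" by blast
      have "seq_ok M (Ik k B') s (\<lambda>x. iota k (j x))" by (rule seq_ins[OF B' j(1) M])
      moreover have "condX M (Ik k B') s (\<lambda>x. iota k (j x)) \<longleftrightarrow> condX M' B' s j"
        by (rule cond_iff[OF B' M k]) simp_all
      ultimately show ?thesis using o cs j(2) by auto
    qed
  qed
  have P6: "(card (B0 (Ik k B')) = 0 \<and> M - 1 \<notin> supp (Ik k B')) \<or>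
    (card (B0 (Ik k B')) \<ge> 1 \<and> (\<exists>i u. seq_ok M (Ik k B') (card (B0 (Ik k B'))) i \<and> is_uB M (Ik k B') i u \<and> even u))"
  proof -
    from H have "(s = 0 \<and> M' - 1 \<notin> supp B') \<or> (s \<ge> 1 \<and> (\<exists>i u. seq_ok M' B' s i \<and> is_uB M' B' i u \<and> even u))"
      unfolding s_def by blast
    then show ?thesis
    proof
      assume a: "s = 0 \<and> M' - 1 \<notin> supp B'"
      have "card (B0 B') = 0" using a s_def by simp
      then have "k < M'" by (rule k0)
      then have "M - 1 \<notin> supp (Ik k B')" using suppM1[OF k M] a by blast
      then show ?thesis using cs a by simp
    next
      assume "s \<ge> 1 \<and> (\<exists>i u. seq_ok M' B' s i \<and> is_uB M' B' i u \<and> even u)"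
      then obtain j u where o: "s \<ge> 1" and j: "seq_ok M' B' s j" "is_uB M' B' j u" "even u" by blast
      have "seq_ok M (Ik k B') s (\<lambda>x. iota k (j x))" by (rule seq_ins[OF B' j(1) M])
      moreover have "is_uB M (Ik k B') (\<lambda>x. iota k (j x)) (iota k u) \<longleftrightarrow> is_uB M' B' j u"
        by (rule uB_iff[OF B' M k]) simp_all
      moreover have "even (iota k u)" using j(3) even_iota by blast
      ultimately show ?thesis using o cs j(2) by auto
    qed
  qed
  show ?thesis unfolding Xprime_iff using PMk intk seqk Mk P5 P6 by blast
qed

lemma key_ctr:
  assumes B': "B' \<in> PM M'" and M: "M = M' + 2" and k: "1 \<le> k" "k \<le> M'"
    and X: "Ik k B' \<in> Xprime M"
  shows "B' \<in> Xprime M' \<and> (card (B0 B') = 0 \<longrightarrow> k < M')"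
proof -
  define s where "s = card (B0 B')"
  note H = X[unfolded Xprime_iff card_B0_Ik[OF B'], folded s_def]
  have intk: "intc B'" using H int_iff[OF B'] unfolding intc_def by blast
  from H obtain i where i: "seq_ok M (Ik k B') s i" by blast
  have seqk: "\<exists>i. seq_ok M' B' (card (B0 B')) i"
    using seq_ctr(1)[OF B' i] unfolding s_def by blast
  have Mk: "M' \<notin> supp B'" using H suppM[OF k(2) M] by blast
  have tr: "\<exists>j. seq_ok M' B' s j \<and> i 1 = iota k (j 1) \<and> i (2*s) = iota k (j (2*s))"
    if "seq_ok M (Ik k B') s i" "s \<ge> 1" for i
  proof -
    have "1 \<in> {1..2*s}" "2*s \<in> {1..2*s}" using that(2) by auto
    then show ?thesis using seq_ctr[OF B' that(1)] by metis
  qed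
  have P5: "s = 0 \<or> (odd s \<and> (\<exists>i. seq_ok M' B' s i \<and> condX M' B' s i))"
  proof -
    from H have "s = 0 \<or> (odd s \<and> (\<exists>i. seq_ok M (Ik k B') s i \<and> condX M (Ik k B') s i))" by blast
    then show ?thesis
    proof
      assume "s = 0" then show ?thesis by simp
    next
      assume "odd s \<and> (\<exists>i. seq_ok M (Ik k B') s i \<and> condX M (Ik k B') s i)"
      then obtain i where o: "odd s" and i: "seq_ok M (Ik k B') s i" "condX M (Ik k B') s i" by blast
      have "s \<ge> 1" using o by (cases s) auto
      then obtain j where j: "seq_ok M' B' s j" "i 1 = iota k (j 1)" "i (2*s) = iota k (j (2*s))"
        using tr[OF i(1)] by blast
      have "condX M (Ik k B') s i \<longleftrightarrow> condX M' B' s j" by (rule cond_iff[OF B' M k j(2,3)])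
      then show ?thesis using o j(1) i(2) by blast
    qed
  qed
  have P6: "(s = 0 \<and> M' - 1 \<notin> supp B' \<and> k < M') \<or> (s \<ge> 1 \<and> (\<exists>i u. seq_ok M' B' s i \<and> is_uB M' B' i u \<and> even u))"
  proof -
    from H have "(s = 0 \<and> M - 1 \<notin> supp (Ik k B')) \<or> (s \<ge> 1 \<and> (\<exists>i u. seq_ok M (Ik k B') s i \<and> is_uB M (Ik k B') i u \<and> even u))"
      by blast
    then show ?thesis
    proof
      assume a: "s = 0 \<and> M - 1 \<notin> supp (Ik k B')"
      then show ?thesis using suppM1[OF k M] by blast
    next
      assume "s \<ge> 1 \<and> (\<exists>i u. seq_ok M (Ik k B') s i \<and> is_uB M (Ik k B') i u \<and> even u)"
      then obtain i u where o: "s \<ge> 1" and i: "seq_ok M (Ik k B') s i" "is_uB M (Ik k B') i u" "even u" by blast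
      obtain j where j: "seq_ok M' B' s j" "i 1 = iota k (j 1)" "i (2*s) = iota k (j (2*s))"
        using tr[OF i(1) o] by blast
      have "u \<noteq> k \<and> u \<noteq> Suc k" by (rule uB_not_k[OF B' M k j(2) j(3)[unfolded s_def] i(2)])
      then have uu: "iota k (ctr k u) = u" using iota_ctr by blast
      have "is_uB M (Ik k B') i (iota k (ctr k u)) \<longleftrightarrow> is_uB M' B' j (ctr k u)"
        by (rule uB_iff[OF B' M k j(2) j(3)[unfolded s_def]])
      then have "is_uB M' B' j (ctr k u)" using i(2) uu by simp
      moreover have "even (ctr k u)" using i(3) uu even_iota by metis
      ultimately show ?thesis using o j(1) by blast
    qed
  qed
  have "B' \<in> Xprime M'" unfolding Xprime_iff using B' intk seqk Mk P5 P6 unfolding s_def by blast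
  moreover have "card (B0 B') = 0 \<longrightarrow> k < M'" using P6 unfolding s_def by auto
  ultimately show ?thesis by blast
qed

lemma card2: "card (X::nat set) = 2 \<Longrightarrow> \<exists>a b. a < b \<and> X = {a, b}"
proof -
  assume "card X = 2"
  then obtain x y where xy: "X = {x, y}" "x \<noteq> y" by (auto simp: card_2_iff)
  show ?thesis
  proof (cases "x < y")
    case True then show ?thesis using xy by blast
  next
    case False then have "y < x" using xy(2) by linarith
    then show ?thesis using xy by (metis insert_commute)
  qed
qed

lemma cov0_emptyC: "cov0 {} X \<longleftrightarrow> X = {}"
  unfolding cov0_def by auto

lemma cov1_emptyC: "cov1 {} X \<longleftrightarrow> (\<exists>u. X = {u})"
  unfolding cov1_alt cov0_emptyC by auto

lemma adj_exists:
  assumes B: "B \<in> PM M" and ic: "intc B" and ne: "B1 B \<noteq> {}"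
  shows "\<exists>k. {k, Suc k} \<in> B"
proof -
  obtain X0 where "X0 \<in> B1 B" using ne by blast
  then obtain X where X: "X \<in> B1 B" and mn: "\<forall>Y. Y \<in> B1 B \<longrightarrow> Max X - Min X \<le> Max Y - Min Y"
    using ex_has_least_nat[of "\<lambda>X. X \<in> B1 B" X0 "\<lambda>X. Max X - Min X"] by blast
  have XB: "X \<in> B" using X unfolding B1_def by blast
  obtain a b where ab: "a < b" "X = {a, b}" using card2 PM_elem(4)[OF B XB] by blast
  have mm: "Min X = a" "Max X = b" using ab by auto
  have "cov0 (B1 B) {Min X + 1 .. Max X - 1}" using ic X unfolding intc_def by blast
  then have cov: "cov0 (B1 B) {a+1..b-1}" by (simp only: mm)
  show ?thesis
  proof (cases "b = Suc a")
    case True then show ?thesis using XB ab by blast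
  next
    case False
    then have "a + 1 \<in> {a+1..b-1}" using ab by auto
    obtain S where S: "S \<subseteq> B1 B" "{a+1..b-1} = (\<Union>P\<in>S. ivl P)"
      using cov unfolding cov0_def by (elim exE conjE)
    obtain P where P0: "P \<in> S" "a + 1 \<in> ivl P" using S(2) \<open>a + 1 \<in> {a+1..b-1}\<close> by blast
    have P: "P \<in> B1 B" "ivl P \<subseteq> {a+1..b-1}" "a + 1 \<in> ivl P" using S P0 by blast+
    have PB: "P \<in> B" using P unfolding B1_def by blast
    have fP: "finite P" "P \<noteq> {}" using PM_elem(1,2)[OF B PB] by auto
    have "Min P \<le> Max P" using Min_le[OF fP(1) Max_in[OF fP]] .
    then have "Min P \<in> ivl P" "Max P \<in> ivl P" unfolding ivl_def by auto
    then have "Min P \<in> {a+1..b-1}" "Max P \<in> {a+1..b-1}" using P(2) by blast+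
    then have "a + 1 \<le> Min P" "Max P \<le> b - 1" by simp_all
    then have "Max P - Min P < Max X - Min X" using mm ab False by linarith
    moreover have "Max X - Min X \<le> Max P - Min P" using mn P(1) by blast
    ultimately have False by linarith
    then show ?thesis ..
  qed
qed

lemma empty_Xprime:
  assumes "1 \<le> N"
  shows "{} \<in> Xprime N"
proof -
  have s: "seq_ok N {} 0 (\<lambda>j. j)" unfolding seq_ok_def by (simp add: B0_def)
  show ?thesis unfolding Xprime_iff
    apply (simp add: PM_def intc_def B1_def B0_def supp_def)
    using s by blast
qed

lemma small_case:
  assumes X: "B \<in> Xprime 3"
  shows "B = {}"
proof (rule ccontr)
  assume "B \<noteq> {}"
  then obtain X where XB: "X \<in> B" by blast
  note H = X[unfolded Xprime_iff]
  have B: "B \<in> PM 3" using H by blast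
  have n3: "3 \<notin> supp B" using H by blast
  have all12: "Y = {1, 2}" if "Y \<in> B" for Y
  proof -
    have "Y \<subseteq> {1..3}" "card Y = 2" using PM_elem[OF B that] by auto
    moreover have "3 \<notin> Y" using n3 that unfolding supp_def by blast
    ultimately have "Y \<subseteq> {1..3} - {3}" by blast
    moreover have "{1..3::nat} - {3} = {1, 2}" by auto
    ultimately have sub: "Y \<subseteq> {1, 2}" by simp
    have "card Y = card {1::nat, 2}" using \<open>card Y = 2\<close> by simp
    then show ?thesis using card_subset_eq[OF _ sub] by simp
  qed
  have "\<not> even (Max Y - Min Y)" if "Y \<in> B" for Y using all12[OF that] by simp
  then have "B0 B = {}" unfolding B0_def by blast
  then have "3 - 1 \<notin> supp B" using H by simp
  moreover have "3 - 1 \<in> supp B" using XB all12[OF XB] unfolding supp_def by auto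
  ultimately show False by blast
qed

lemma noadj:
  assumes X: "B \<in> Xprime N" and oN: "odd N" and na: "\<forall>k. {k, Suc k} \<notin> B"
  shows "B \<in> PrP N"
proof -
  define s where "s = card (B0 B)"
  note H = X[unfolded Xprime_iff, folded s_def]
  have B: "B \<in> PM N" and ic: "intc B" using H by blast+
  have B1e: "B1 B = {}" using adj_exists[OF B ic] na by blast
  have B0e: "B0 B = B" using B1e unfolding B0_def B1_def by blast
  show ?thesis
  proof (cases "s = 0")
    case True
    have "finite B" using B unfolding PM_def by blast
    then have "B = {}" using True B0e s_def by simp
    then show ?thesis unfolding PrP_def by simp
  next
    case False
    have os: "odd s" using H False by blast
    obtain i u where i: "seq_ok N B s i" and u: "is_uB N B i u" "even u" using H False by blast
    from i have rng: "\<forall>j\<in>{1..2*s}. i j \<in> {1..N}"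
      and m: "strict_mono_on {1..2*s} i"
      and b0: "B0 B = {{i (2*s+1-j), i j} | j. j \<in> {1..s}}"
      and g1: "\<forall>j\<in>{1..<s}. cov0 (B1 B) {i j + 1 .. i (j+1) - 1}"
      and g2: "\<forall>j\<in>{s+1..<2*s}. cov0 (B1 B) {i j + 1 .. i (j+1) - 1}"
      unfolding seq_ok_def by blast+
    have g1': "i (j+1) \<le> i j + 1" if "j \<in> {1..<s}" for j
    proof -
      have "{i j + 1 .. i (j+1) - 1} = {}" using g1 that B1e cov0_emptyC by metis
      then show ?thesis by simp
    qed
    have g2': "i (j+1) \<le> i j + 1" if "j \<in> {s+1..<2*s}" for j
    proof -
      have "{i j + 1 .. i (j+1) - 1} = {}" using g2 that B1e cov0_emptyC by metis
      then show ?thesis by simp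
    qed
    have mono: "i a < i b" if "a \<in> {1..2*s}" "b \<in> {1..2*s}" "a < b" for a b
      using m that by (simp add: strict_mono_onD)
    have uu: "(u \<in> {1 .. i 1 - 1} \<and> {1 .. u - 1} = {}) \<or>
        ({1 .. i 1 - 1} = {} \<and> u \<in> {i (2*s) + 1 .. N - 1} \<and> {i (2*s) + 1 .. u - 1} = {} \<and> {u + 1 .. N - 1} = {})"
      using u(1) unfolding is_uB_def Let_def s_def[symmetric] B1e cov0_emptyC by blast
    have "\<not> (u \<in> {1 .. i 1 - 1} \<and> {1 .. u - 1} = {})"
    proof
      assume "u \<in> {1 .. i 1 - 1} \<and> {1 .. u - 1} = {}"
      then have "u = 1" by auto
      then show False using u(2) by simp
    qed
    then have c2: "{1 .. i 1 - 1} = {}" "u \<in> {i (2*s) + 1 .. N - 1}" "{i (2*s) + 1 .. u - 1} = {}" "{u + 1 .. N - 1} = {}"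
      using uu by blast+
    have s1: "1 \<le> s" using False by simp
    have "i 1 \<in> {1..N}" using rng s1 by auto
    then have i1: "i 1 = 1" using c2(1) by auto
    have i2s: "i (2*s) = N - 2" using c2(2,3,4) by auto
    have A: "1 \<le> j \<longrightarrow> j \<le> s \<longrightarrow> i j = j" for j
    proof (induction j)
      case 0 then show ?case by simp
    next
      case (Suc j)
      show ?case
      proof (cases "j = 0")
        case True then show ?thesis using i1 by simp
      next
        case False
        show ?thesis
        proof (intro impI)
          assume "Suc j \<le> s"
          then have j: "j \<in> {1..<s}" using False by auto
          then have "i j = j" using Suc.IH by auto
          moreover have "i (j+1) \<le> i j + 1" using g1'[OF j] .
          moreover have "i j < i (j+1)" using mono[of j "j+1"] j by auto
          ultimately show "i (Suc j) = Suc j" by simp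
        qed
      qed
    qed
    have Bd: "d < s \<longrightarrow> i (2*s - d) = N - 2 - d" for d
    proof (induction d)
      case 0 then show ?case using i2s by simp
    next
      case (Suc d)
      show ?case
      proof
        assume d: "Suc d < s"
        define j where "j = 2*s - Suc d"
        have j: "j \<in> {s+1..<2*s}" "j + 1 = 2*s - d" using d unfolding j_def by auto
        have "i (j+1) = N - 2 - d" using Suc.IH d j(2) by simp
        moreover have "i (j+1) \<le> i j + 1" using g2'[OF j(1)] .
        moreover have "i j < i (j+1)" using mono[of j "j+1"] j by auto
        ultimately show "i (2*s - Suc d) = N - 2 - Suc d" unfolding j_def[symmetric] by linarith
      qed
    qed
    have C: "i (2*s+1-j) = N - 1 - j" if "j \<in> {1..s}" for j
    proof -
      have "j - 1 < s" "2*s - (j - 1) = 2*s+1-j" using that by auto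
      then have "i (2*s+1-j) = N - 2 - (j - 1)" using Bd by metis
      then show ?thesis using that by simp
    qed
    have Beq: "B = {{N - 1 - j, j} | j. j \<in> {1..s}}"
    proof -
      have "B = {{i (2*s+1-j), i j} | j. j \<in> {1..s}}" using B0e b0 by simp
      also have "\<dots> = (\<lambda>j. {i (2*s+1-j), i j}) ` {1..s}" by (rule Setcompr_eq_image)
      also have "\<dots> = (\<lambda>j. {N - 1 - j, j}) ` {1..s}"
        by (rule image_cong[OF refl]) (use A C in auto)
      also have "\<dots> = {{N - 1 - j, j} | j. j \<in> {1..s}}" by (rule Setcompr_eq_image[symmetric])
      finally show ?thesis .
    qed
    have "i s = s" using A s1 by blast
    moreover have "i (s+1) = N - 1 - s" using C[of s] s1 by simp
    moreover have "i s < i (s+1)" using mono[of s "s+1"] s1 by auto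
    ultimately have "s < N - 1 - s" by simp
    moreover obtain m where Nm: "N = 2*m+1" using oN oddE by blast
    moreover have "(N - 1) div 2 = m" using Nm by simp
    ultimately have tau: "s + 1 \<le> (N - 1) div 2" by linarith
    have "even (s + 1)" using os by simp
    moreover have "s + 1 \<in> {2..(N - 1) div 2}" using tau s1 by auto
    moreover have "B = {{N - 1 - j, j} | j. j \<in> {1..(s+1)-1}}" using Beq by simp
    ultimately show ?thesis unfolding PrP_def by blast
  qed
qed

lemma rainbow_Xprime:
  assumes oN: "odd N" and s1: "1 \<le> s" and os: "odd s" and sN: "2*s + 3 \<le> N"
  shows "{{N - 1 - j, j} | j. j \<in> {1..s}} \<in> Xprime N"
proof -
  define p where "p j = {N - 1 - j, (j::nat)}" for j
  define B where "B = {{N - 1 - j, j} | j. j \<in> {1..s}}"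
  have Bp: "B = p ` {1..s}" unfolding B_def p_def by (rule Setcompr_eq_image)
  have lt: "j < N - 1 - j" if "j \<in> {1..s}" for j using that sN by auto
  have mn: "Min (p j) = j" "Max (p j) = N - 1 - j" if "j \<in> {1..s}" for j
    using lt[OF that] unfolding p_def by auto
  have injp: "inj_on p {1..s}"
  proof (rule inj_onI)
    fix a b assume "a \<in> {1..s}" "b \<in> {1..s}" "p a = p b"
    then show "a = b" using mn by metis
  qed
  have PMB: "B \<in> PM N" unfolding PM_def
  proof (intro CollectI conjI ballI impI)
    show "finite B" unfolding Bp by simp
  next
    fix X assume "X \<in> B"
    then obtain j where j: "j \<in> {1..s}" "X = p j" unfolding Bp by blast
    show "X \<subseteq> {1..N}" using j sN unfolding p_def by auto
    show "card X = 2" using j lt[OF j(1)] unfolding p_def by auto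
  next
    fix X Y assume "X \<in> B" "Y \<in> B" "X \<noteq> Y"
    then obtain a b where a: "a \<in> {1..s}" "X = p a" and b: "b \<in> {1..s}" "Y = p b" unfolding Bp by blast
    then have "a \<noteq> b" using \<open>X \<noteq> Y\<close> by blast
    then show "X \<inter> Y = {}" using a b sN unfolding p_def by auto
  qed
  have evp: "even (Max (p j) - Min (p j))" if "j \<in> {1..s}" for j
  proof -
    have "Max (p j) - Min (p j) = N - 1 - 2 * j" using mn[OF that] by simp
    moreover obtain m where "N = 2*m+1" using oN oddE by blast
    ultimately show ?thesis by simp
  qed
  have B1e: "B1 B = {}" unfolding B1_def Bp using evp by blast
  have B0e: "B0 B = B" unfolding B0_def Bp using evp by blast
  have cB: "card (B0 B) = s" using B0e card_image[OF injp] Bp by simp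
  define i where "i j = (if j \<le> s then j else N - 2 - 2*s + j)" for j
  have i1: "i 1 = 1" using s1 unfolding i_def by simp
  have i2: "i (2*s) = N - 2" using s1 sN unfolding i_def by simp
  have seq: "seq_ok N B s i" unfolding seq_ok_def
  proof (intro conjI)
    show "s = card (B0 B)" using cB by simp
    show "\<forall>j\<in>{1..2*s}. i j \<in> {1..N}" using sN unfolding i_def by auto
    show "strict_mono_on {1..2*s} i"
      by (rule strict_mono_onI) (use sN in \<open>auto simp: i_def\<close>)
    have "{{i (2*s+1-j), i j} | j. j \<in> {1..s}} = (\<lambda>j. {i (2*s+1-j), i j}) ` {1..s}"
      by (rule Setcompr_eq_image)
    also have "\<dots> = p ` {1..s}"
      by (rule image_cong[OF refl]) (use sN in \<open>auto simp: i_def p_def\<close>)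
    finally show "B0 B = {{i (2*s+1-j), i j} | j. j \<in> {1..s}}" using B0e Bp by simp
    show "\<forall>j\<in>{1..<s}. cov0 (B1 B) {i j + 1 .. i (j+1) - 1}"
      unfolding B1e cov0_emptyC by (auto simp: i_def)
    show "\<forall>j\<in>{s+1..<2*s}. cov0 (B1 B) {i j + 1 .. i (j+1) - 1}"
      unfolding B1e cov0_emptyC using sN by (auto simp: i_def)
  qed
  have intB: "intc B" unfolding intc_def B1e by simp
  have suppB: "x \<in> supp B \<Longrightarrow> x \<le> N - 2" for x
    unfolding supp_def Bp p_def using sN by auto
  have NB: "N \<notin> supp B" using suppB sN by fastforce
  have cnd: "condX N B s i"
    unfolding condX_def B1e cov0_emptyC cov1_emptyC i1 i2 using sN by auto
  have ub: "is_uB N B i (N - 1)"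
    unfolding is_uB_def Let_def cB B1e cov0_emptyC cov1_emptyC i1 i2 using sN by auto
  have ev: "even (N - 1)" using oN by simp
  have "B \<in> Xprime N" unfolding Xprime_iff cB
    using PMB intB seq NB os cnd s1 ub ev by blast
  then show ?thesis unfolding B_def .
qed

lemma PrP_Xprime:
  assumes oN: "odd N" and N3: "3 \<le> N" and B: "B \<in> PrP N"
  shows "B \<in> Xprime N"
proof -
  from B have "B = {} \<or> (\<exists>\<tau>. B = {{N - 1 - j, j} | j. j \<in> {1..\<tau>-1}} \<and> even \<tau> \<and> \<tau> \<in> {2..(N-1) div 2})"
    unfolding PrP_def by blast
  then show ?thesis
  proof
    assume "B = {}" then show ?thesis using empty_Xprime N3 by simp
  next
    assume "\<exists>\<tau>. B = {{N - 1 - j, j} | j. j \<in> {1..\<tau>-1}} \<and> even \<tau> \<and> \<tau> \<in> {2..(N-1) div 2}"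
    then obtain \<tau> where t: "B = {{N - 1 - j, j} | j. j \<in> {1..\<tau>-1}}" "even \<tau>" "\<tau> \<in> {2..(N-1) div 2}"
      by blast
    obtain m where Nm: "N = 2*m+1" using oN oddE by blast
    have "1 \<le> \<tau> - 1" "odd (\<tau> - 1)" "2*(\<tau> - 1) + 3 \<le> N" using t(2,3) Nm by auto
    from rainbow_Xprime[OF oN this] show ?thesis using t(1) by simp
  qed
qed

theorem theorem4p3:
  fixes N :: nat
  assumes "odd N" and "3 \<le> N"
  shows "Xprime N = sharpX N"
  using assms
proof (induction N rule: less_induct)
  case (less N)
  show ?case
  proof (cases "N < 5")
    case True
    then have N3: "N = 3" using less.prems by presburger
    have S: "sharpX N = {{}}" using True by (subst sharpX.simps) (simp only: if_True)
    have "Xprime N = {{}}"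
    proof
      show "Xprime N \<subseteq> {{}}" using small_case N3 by blast
      show "{{}} \<subseteq> Xprime N" using empty_Xprime N3 by simp
    qed
    then show ?thesis using S by simp
  next
    case False
    have oN2: "odd (N - 2)" using less.prems(1) False by presburger
    have IH: "Xprime (N - 2) = sharpX (N - 2)"
      using less.IH[of "N - 2"] oN2 False by simp
    have SX: "sharpX N = {B \<in> PM N. B \<in> PrP N
        \<or> (card (B0 B) > 0 \<and> (\<exists>k\<in>{1..N-2}. \<exists>B'\<in>sharpX (N-2). B = Ik k B'))
        \<or> (card (B0 B) = 0 \<and> (\<exists>k\<in>{1..N-3}. \<exists>B'\<in>sharpX (N-2). B = Ik k B'))}"
      using False by (subst sharpX.simps) (simp only: if_False)
    have NM: "N = (N - 2) + 2" using False by simp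
    show ?thesis
    proof
      show "Xprime N \<subseteq> sharpX N"
      proof
        fix B assume BX: "B \<in> Xprime N"
        have B: "B \<in> PM N" and NB: "N \<notin> supp B" using BX unfolding Xprime_iff by blast+
        show "B \<in> sharpX N"
        proof (cases "\<exists>k. {k, Suc k} \<in> B")
          case True
          then obtain k where kB: "{k, Suc k} \<in> B" by blast
          have "{k, Suc k} \<subseteq> {1..N}" using PM_elem(3)[OF B kB] .
          then have k1: "1 \<le> k" and kN: "Suc k \<le> N" by auto
          have "Suc k \<noteq> N" using NB kB unfolding supp_def by blast
          then have kN': "Suc k < N" using kN by simp
          define B' where "B' = ctrB k B"
          have B'PM: "B' \<in> PM (N - 2)" unfolding B'_def by (rule contract2[OF B kB kN'])
          have IkB: "Ik k B' = B" unfolding B'_def by (rule contract1[OF B kB])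
          have k2: "k \<le> N - 2" using kN' by simp
          have kc: "B' \<in> Xprime (N - 2) \<and> (card (B0 B') = 0 \<longrightarrow> k < N - 2)"
            by (rule key_ctr[OF B'PM NM k1 k2]) (simp add: IkB BX)
          have cc: "card (B0 B) = card (B0 B')" using card_B0_Ik[OF B'PM, of k] IkB by simp
          have B'S: "B' \<in> sharpX (N - 2)" using kc IH by simp
          show ?thesis
          proof (cases "card (B0 B) = 0")
            case True
            then have "k \<in> {1..N-3}" using kc cc k1 by auto
            then show ?thesis unfolding SX using B True B'S IkB by blast
          next
            case False
            then have "k \<in> {1..N-2}" using k1 k2 by auto
            then show ?thesis unfolding SX using B False B'S IkB by blast
          qed
        next
          case False
          then have "B \<in> PrP N" using noadj[OF BX less.prems(1)] by blast
          then show ?thesis unfolding SX using B by blast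
        qed
      qed
    next
      show "sharpX N \<subseteq> Xprime N"
      proof
        fix B assume "B \<in> sharpX N"
        then have B: "B \<in> PM N" and d: "B \<in> PrP N
          \<or> (card (B0 B) > 0 \<and> (\<exists>k\<in>{1..N-2}. \<exists>B'\<in>sharpX (N-2). B = Ik k B'))
          \<or> (card (B0 B) = 0 \<and> (\<exists>k\<in>{1..N-3}. \<exists>B'\<in>sharpX (N-2). B = Ik k B'))"
          unfolding SX by blast+
        show "B \<in> Xprime N"
        proof (cases "B \<in> PrP N")
          case True
          then show ?thesis using PrP_Xprime less.prems by blast
        next
          case False
          with d have "(card (B0 B) > 0 \<and> (\<exists>k\<in>{1..N-2}. \<exists>B'\<in>sharpX (N-2). B = Ik k B'))
            \<or> (card (B0 B) = 0 \<and> (\<exists>k\<in>{1..N-3}. \<exists>B'\<in>sharpX (N-2). B = Ik k B'))" by blast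
          then obtain k B' where kB': "k \<in> {1..N-2}" "B' \<in> Xprime (N - 2)" "B = Ik k B'"
            and k0: "card (B0 B) = 0 \<Longrightarrow> k \<in> {1..N-3}"
          proof (elim disjE conjE bexE)
            fix k B' assume h: "0 < card (B0 B)" "k \<in> {1..N-2}" "B' \<in> sharpX (N-2)" "B = Ik k B'"
              and th: "\<And>k B'. k \<in> {1..N-2} \<Longrightarrow> B' \<in> Xprime (N - 2) \<Longrightarrow> B = Ik k B' \<Longrightarrow>
                 (card (B0 B) = 0 \<Longrightarrow> k \<in> {1..N-3}) \<Longrightarrow> thesis"
            show thesis by (rule th[OF h(2) _ h(4)]) (use h(1,3) IH in simp_all)
          next
            fix k B' assume h: "card (B0 B) = 0" "k \<in> {1..N-3}" "B' \<in> sharpX (N-2)" "B = Ik k B'"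
              and th: "\<And>k B'. k \<in> {1..N-2} \<Longrightarrow> B' \<in> Xprime (N - 2) \<Longrightarrow> B = Ik k B' \<Longrightarrow>
                 (card (B0 B) = 0 \<Longrightarrow> k \<in> {1..N-3}) \<Longrightarrow> thesis"
            have "k \<in> {1..N-2}" using h(2) by auto
            show thesis by (rule th[OF \<open>k \<in> {1..N-2}\<close> _ h(4)]) (use h(2,3) IH in simp_all)
          qed
          have B'PM: "B' \<in> PM (N - 2)" using kB'(2) unfolding Xprime_iff by blast
          have cc: "card (B0 B) = card (B0 B')" using card_B0_Ik[OF B'PM, of k] kB'(3) by simp
          have "Ik k B' \<in> Xprime N"
            by (rule key_ins[OF kB'(2) NM]) (use kB'(1) k0 cc False in auto)
          then show ?thesis using kB'(3) by simp
        qed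
      qed
    qed
  qed
qed


end
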